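(* Let $X$ be a complex Banach space with open unit ball $B$, let $H(B)$ be a uniform algebra with $A_u(B)\subseteq H(B)\subseteq H^\infty(B)$, and let $x^{**}\in\bar B^{**}$. Then $Cl_B(f,x^{**})=\hat f(M_{x^{**}})$ for all $f\in H(B)$ if and only if the following holds: for every finite family $f_1,\dots,f_{n-1}\in A(B)$ and $f_n\in H(B)$ for which there is $\delta>0$ with $|f_1(x)|+\dots+|f_n(x)|\ge\delta$ for all $x\in B$, the functions $\hat f_1,\dots,\hat f_n$ have no common zero in $M_{x^{**}}$.
   Context: $H^\infty(B)$: bounded holomorphic functions on $B$ with sup norm; $A(B)$: closed subalgebra of $H^\infty(B)$ generated by $1$ and the restrictions to $B$ of $X^*$; $A_u(B)$: uniformly continuous holomorphic functions on $B$; a uniform algebra between $A_u(B)$ and $H^\infty(B)$ is a closed unital subalgebra of $H^\infty(B)$ containing $A_u(B)$. $M_{H(B)}$ is its spectrum, $\hat f$ the Gelfand transform. $\bar B^{**}$ is the closed unit ball of $X^{**}$. Cluster set: $Cl_B(f,x^{**})=\{\lambda:\exists\text{ net }(x_\alpha)\subset B,\ x_\alpha\to x^{**}\text{ weak-star},\ f(x_\alpha)\to\lambda\}$. Fiber: $M_{x^{**}}=\{\tau\in M_{H(B)}:\tau(L)=x^{**}(L)\ \forall L\in X^*\}$. *)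

theory Defs
  imports "HOL-Analysis.Analysis"
begin

class complex_banach = banach +
  fixes scaleC :: "complex \<Rightarrow> 'a \<Rightarrow> 'a" (infixr \<open>*\<^sub>C\<close> 75)
  assumes scaleC_add_right: "a *\<^sub>C (x + y) = a *\<^sub>C x + a *\<^sub>C y"
    and scaleC_add_left: "(a + b) *\<^sub>C x = a *\<^sub>C x + b *\<^sub>C x"
    and scaleC_scaleC: "a *\<^sub>C (b *\<^sub>C x) = (a * b) *\<^sub>C x"
    and scaleC_one: "1 *\<^sub>C x = x"
    and scaleC_of_real: "complex_of_real r *\<^sub>C x = r *\<^sub>R x"
    and norm_scaleC: "norm (a *\<^sub>C x) = cmod a * norm x"

definition complex_linear :: "('a::complex_banach \<Rightarrow> 'b::complex_banach) \<Rightarrow> bool" where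
  "complex_linear L \<longleftrightarrow> (\<forall>x y. L (x + y) = L x + L y) \<and> (\<forall>c x. L (c *\<^sub>C x) = c *\<^sub>C L x)"

instantiation complex :: complex_banach
begin
definition scaleC_complex :: "complex \<Rightarrow> complex \<Rightarrow> complex" where
  "scaleC_complex a z = a * z"
instance
  by standard (auto simp: scaleC_complex_def algebra_simps norm_mult scaleR_conv_of_real)
end

definition dual_space :: "('a::complex_banach \<Rightarrow> complex) set" where
  "dual_space = {L. complex_linear L \<and> bounded_linear L}"

text \<open>The closed unit ball of the bidual \<open>X**\<close>: complex-linear functionals on \<open>X*\<close>
  of norm at most 1 (extended by 0 outside \<open>X*\<close>).\<close>
definition bidual_ball :: "(('a::complex_banach \<Rightarrow> complex) \<Rightarrow> complex) set" where
  "bidual_ball = {\<phi>.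
     (\<forall>L1\<in>dual_space. \<forall>L2\<in>dual_space. \<phi> (\<lambda>x. L1 x + L2 x) = \<phi> L1 + \<phi> L2) \<and>
     (\<forall>c. \<forall>L\<in>dual_space. \<phi> (\<lambda>x. c * L x) = c * \<phi> L) \<and>
     (\<forall>L\<in>dual_space. cmod (\<phi> L) \<le> onorm L) \<and>
     (\<forall>L. L \<notin> dual_space \<longrightarrow> \<phi> L = 0)}"

definition holomorphic_on_B :: "('a::complex_banach \<Rightarrow> complex) \<Rightarrow> 'a set \<Rightarrow> bool" where
  "holomorphic_on_B f U \<longleftrightarrow>
     (\<forall>x\<in>U. \<exists>f'. (f has_derivative f') (at x) \<and> complex_linear f')"

text \<open>Functions on \<open>U\<close> are represented extensionally (value 0 outside \<open>U\<close>).\<close>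
definition Hinf :: "'a::complex_banach set \<Rightarrow> ('a \<Rightarrow> complex) set" where
  "Hinf U = {f. holomorphic_on_B f U \<and> bounded (f ` U) \<and> (\<forall>x. x \<notin> U \<longrightarrow> f x = 0)}"

definition Au :: "'a::complex_banach set \<Rightarrow> ('a \<Rightarrow> complex) set" where
  "Au U = {f \<in> Hinf U. uniformly_continuous_on U f}"

definition one_on :: "'a set \<Rightarrow> 'a \<Rightarrow> complex" where
  "one_on U = (\<lambda>x. if x \<in> U then 1 else 0)"

definition restr :: "'a set \<Rightarrow> ('a \<Rightarrow> complex) \<Rightarrow> 'a \<Rightarrow> complex" where
  "restr U f = (\<lambda>x. if x \<in> U then f x else 0)"

definition closed_unital_subalgebra :: "'a::complex_banach set \<Rightarrow> ('a \<Rightarrow> complex) set \<Rightarrow> bool" where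
  "closed_unital_subalgebra U A \<longleftrightarrow>
     A \<subseteq> Hinf U \<and> one_on U \<in> A \<and>
     (\<forall>f\<in>A. \<forall>g\<in>A. (\<lambda>x. f x + g x) \<in> A) \<and>
     (\<forall>f\<in>A. \<forall>g\<in>A. (\<lambda>x. f x * g x) \<in> A) \<and>
     (\<forall>c. \<forall>f\<in>A. (\<lambda>x. c * f x) \<in> A) \<and>
     (\<forall>(F :: nat \<Rightarrow> 'a \<Rightarrow> complex) g. (\<forall>n. F n \<in> A) \<and> g \<in> Hinf U \<and>
        (\<forall>\<epsilon>>0. \<exists>N. \<forall>n\<ge>N. \<forall>x\<in>U. cmod (F n x - g x) < \<epsilon>) \<longrightarrow> g \<in> A)"

definition uniform_algebra_between :: "'a::complex_banach set \<Rightarrow> ('a \<Rightarrow> complex) set \<Rightarrow> bool" where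
  "uniform_algebra_between U H \<longleftrightarrow> closed_unital_subalgebra U H \<and> Au U \<subseteq> H"

definition A_alg :: "'a::complex_banach set \<Rightarrow> ('a \<Rightarrow> complex) set" where
  "A_alg U = \<Inter>{A. closed_unital_subalgebra U A \<and> (\<forall>L\<in>dual_space. restr U L \<in> A)}"

definition spectrum_alg :: "('a \<Rightarrow> complex) set \<Rightarrow> (('a \<Rightarrow> complex) \<Rightarrow> complex) set" where
  "spectrum_alg H = {\<tau>.
     (\<forall>f\<in>H. \<forall>g\<in>H. \<tau> (\<lambda>x. f x + g x) = \<tau> f + \<tau> g) \<and>
     (\<forall>c. \<forall>f\<in>H. \<tau> (\<lambda>x. c * f x) = c * \<tau> f) \<and>
     (\<forall>f\<in>H. \<forall>g\<in>H. \<tau> (\<lambda>x. f x * g x) = \<tau> f * \<tau> g) \<and>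
     (\<exists>f\<in>H. \<tau> f \<noteq> 0)}"

definition gelfand :: "('a \<Rightarrow> complex) \<Rightarrow> (('a \<Rightarrow> complex) \<Rightarrow> complex) \<Rightarrow> complex" where
  "gelfand f = (\<lambda>\<tau>. \<tau> f)"

definition fiber :: "'a::complex_banach set \<Rightarrow> ('a \<Rightarrow> complex) set \<Rightarrow>
    (('a \<Rightarrow> complex) \<Rightarrow> complex) \<Rightarrow> (('a \<Rightarrow> complex) \<Rightarrow> complex) set" where
  "fiber U H \<phi> = {\<tau> \<in> spectrum_alg H. \<forall>L\<in>dual_space. \<tau> (restr U L) = \<phi> L}"

text \<open>Cluster set; nets in \<open>U\<close> are represented by proper filters on the space that
  eventually lie in \<open>U\<close>. Weak-star convergence to \<open>\<phi>\<close>: \<open>L(x\<^sub>\<alpha>) \<rightarrow> \<phi>(L)\<close> for all \<open>L \<in> X*\<close>.\<close>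
definition cluster_set :: "'a::complex_banach set \<Rightarrow> ('a \<Rightarrow> complex) \<Rightarrow>
    (('a \<Rightarrow> complex) \<Rightarrow> complex) \<Rightarrow> complex set" where
  "cluster_set U f \<phi> = {c. \<exists>F :: 'a filter. F \<noteq> bot \<and> eventually (\<lambda>x. x \<in> U) F \<and>
     (\<forall>L\<in>dual_space. ((\<lambda>x. L x) \<longlongrightarrow> \<phi> L) F) \<and> (f \<longlongrightarrow> c) F}"

end

theory Submission
  imports Defs
begin


lemma cua_facts:
  assumes "closed_unital_subalgebra U A"
  shows "A \<subseteq> Hinf U" "one_on U \<in> A"
    "\<And>f g. f\<in>A \<Longrightarrow> g\<in>A \<Longrightarrow> (\<lambda>x. f x + g x) \<in> A"
    "\<And>f g. f\<in>A \<Longrightarrow> g\<in>A \<Longrightarrow> (\<lambda>x. f x * g x) \<in> A"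
    "\<And>c f. f\<in>A \<Longrightarrow> (\<lambda>x. c * f x) \<in> A"
    "\<And>(F :: nat \<Rightarrow> _) g. (\<And>n. F n \<in> A) \<Longrightarrow> g \<in> Hinf U \<Longrightarrow> (\<And>\<epsilon>. \<epsilon>>0 \<Longrightarrow> \<exists>N. \<forall>n\<ge>N. \<forall>x\<in>U. cmod (F n x - g x) < \<epsilon>) \<Longrightarrow> g \<in> A"
proof -
  note d = assms[unfolded closed_unital_subalgebra_def]
  show "A \<subseteq> Hinf U" using d by (elim conjE)
  show "one_on U \<in> A" using d by (elim conjE)
  show "\<And>f g. f\<in>A \<Longrightarrow> g\<in>A \<Longrightarrow> (\<lambda>x. f x + g x) \<in> A" using d by (elim conjE) simp
  show "\<And>f g. f\<in>A \<Longrightarrow> g\<in>A \<Longrightarrow> (\<lambda>x. f x * g x) \<in> A" using d by (elim conjE) simp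
  show "\<And>c f. f\<in>A \<Longrightarrow> (\<lambda>x. c * f x) \<in> A" using d by (elim conjE) simp
  have c6: "\<forall>(F :: nat \<Rightarrow> _) g. (\<forall>n. F n \<in> A) \<and> g \<in> Hinf U \<and> (\<forall>\<epsilon>>0. \<exists>N. \<forall>n\<ge>N. \<forall>x\<in>U. cmod (F n x - g x) < \<epsilon>) \<longrightarrow> g \<in> A"
    using d by (elim conjE)
  show "g \<in> A" if "\<And>n. F n \<in> A" "g \<in> Hinf U" "\<And>\<epsilon>. \<epsilon>>0 \<Longrightarrow> \<exists>N. \<forall>n\<ge>N. \<forall>x\<in>U. cmod (F n x - g x) < \<epsilon>" for F :: "nat \<Rightarrow> _" and g
    by (rule c6[rule_format, of F]) (use that in auto)
qed

lemma spec_facts: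
  assumes "\<tau> \<in> spectrum_alg A"
  shows "\<And>f g. f\<in>A \<Longrightarrow> g\<in>A \<Longrightarrow> \<tau> (\<lambda>x. f x + g x) = \<tau> f + \<tau> g"
    "\<And>c f. f\<in>A \<Longrightarrow> \<tau> (\<lambda>x. c * f x) = c * \<tau> f"
    "\<And>f g. f\<in>A \<Longrightarrow> g\<in>A \<Longrightarrow> \<tau> (\<lambda>x. f x * g x) = \<tau> f * \<tau> g"
    "\<exists>f\<in>A. \<tau> f \<noteq> 0"
proof -
  note d = assms[unfolded spectrum_alg_def mem_Collect_eq]
  show "\<And>f g. f\<in>A \<Longrightarrow> g\<in>A \<Longrightarrow> \<tau> (\<lambda>x. f x + g x) = \<tau> f + \<tau> g" using d by (elim conjE) simp
  show "\<And>c f. f\<in>A \<Longrightarrow> \<tau> (\<lambda>x. c * f x) = c * \<tau> f" using d by (elim conjE) simp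
  show "\<And>f g. f\<in>A \<Longrightarrow> g\<in>A \<Longrightarrow> \<tau> (\<lambda>x. f x * g x) = \<tau> f * \<tau> g" using d by (elim conjE) simp
  show "\<exists>f\<in>A. \<tau> f \<noteq> 0" using d by (elim conjE)
qed

lemma one_mult: "f \<in> Hinf U \<Longrightarrow> (\<lambda>x. one_on U x * f x) = f"
  by (auto simp: Hinf_def one_on_def)

lemma tau_one:
  assumes "closed_unital_subalgebra U A" "\<tau> \<in> spectrum_alg A"
  shows "\<tau> (one_on U) = 1"
proof -
  obtain f where f: "f \<in> A" "\<tau> f \<noteq> 0" using spec_facts(4)[OF assms(2)] by blast
  have "f \<in> Hinf U" using f cua_facts(1)[OF assms(1)] by blast
  then have "\<tau> f = \<tau> (one_on U) * \<tau> f"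
    using spec_facts(3)[OF assms(2) cua_facts(2)[OF assms(1)] f(1)] one_mult by metis
  then show ?thesis using f(2) by simp
qed

lemma restr_dual_Au:
  fixes U :: "'a::complex_banach set"
  assumes "open U" "bounded U" "L \<in> dual_space"
  shows "restr U L \<in> Au U"
proof -
  have bl: "bounded_linear L" and cl: "complex_linear L" using assms(3) by (auto simp: dual_space_def)
  have hol: "holomorphic_on_B (restr U L) U"
    unfolding holomorphic_on_B_def
  proof
    fix x assume x: "x \<in> U"
    have "(L has_derivative L) (at x)" using bl by (rule bounded_linear_imp_has_derivative)
    then have "(restr U L has_derivative L) (at x)"
      by (rule has_derivative_transform_within_open[OF _ assms(1) x]) (simp add: restr_def)
    then show "\<exists>f'. (restr U L has_derivative f') (at x) \<and> complex_linear f'" using cl by blast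
  qed
  have "restr U L ` U = L ` U" by (auto simp: restr_def)
  then have bd: "bounded (restr U L ` U)" using bounded_linear_image[OF assms(2) bl] by simp
  have "uniformly_continuous_on U L"
    using bounded_linear.uniformly_continuous_on[OF bl uniformly_continuous_on_id] by simp
  then have uc: "uniformly_continuous_on U (restr U L)"
    unfolding uniformly_continuous_on_def by (simp add: restr_def)
  show ?thesis using hol bd uc unfolding Au_def Hinf_def by (auto simp: restr_def)
qed



lemma geom_id:
  fixes z l :: complex
  assumes "l \<noteq> 0"
  shows "(l - z) * (\<Sum>m<N. z^m / l^(Suc m)) = 1 - (z/l)^N"
proof (induction N)
  case 0 then show ?case by simp
next
  case (Suc N)
  have "(l - z) * (\<Sum>m<Suc N. z^m / l^(Suc m)) = (1 - (z/l)^N) + (l - z) * (z^N / l^(Suc N))"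
    using Suc by (simp add: algebra_simps)
  also have "\<dots> = 1 - (z/l)^Suc N" using assms by (simp add: field_simps power_divide)
  finally show ?case .
qed

lemma tau_bound:
  fixes U :: "'a::complex_banach set"
  assumes A: "closed_unital_subalgebra U A" and oU: "open U"
    and t: "\<tau> \<in> spectrum_alg A" and h: "h \<in> A" and M: "0 \<le> M" and hb: "\<And>x. x \<in> U \<Longrightarrow> cmod (h x) \<le> M"
  shows "cmod (\<tau> h) \<le> M"
proof (rule ccontr)
  assume "\<not> cmod (\<tau> h) \<le> M"
  define l where "l = \<tau> h"
  have lM: "M < cmod l" using \<open>\<not> _\<close> l_def by simp
  then have l0: "l \<noteq> 0" using M by auto
  have hH: "h \<in> Hinf U" using h cua_facts(1)[OF A] by blast
  have dist: "cmod l - M \<le> cmod (l - h x)" if "x \<in> U" for x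
    using hb[OF that] norm_triangle_ineq2[of l "h x"] by simp
  have ne: "l - h x \<noteq> 0" if "x \<in> U" for x using dist[OF that] lM by auto
  define k where "k = restr U (\<lambda>x. 1 / (l - h x))"
  have kH: "k \<in> Hinf U"
  proof -
    have hol: "holomorphic_on_B k U" unfolding holomorphic_on_B_def
    proof
      fix x assume x: "x \<in> U"
      obtain h' where h': "(h has_derivative h') (at x)" "complex_linear h'"
        using hH x unfolding Hinf_def holomorphic_on_B_def by blast
      have d1: "((\<lambda>w. 1 / (l - w)) has_field_derivative 1 / (l - h x)^2) (at (h x))"
        using ne[OF x] by (auto intro!: derivative_eq_intros simp: power2_eq_square field_simps)
      have "((\<lambda>y. 1 / (l - h y)) has_derivative (\<lambda>v. 1 / (l - h x)^2 * h' v)) (at x)"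
        using has_derivative_compose[OF h'(1) d1[unfolded has_field_derivative_def]] by simp
      then have "(k has_derivative (\<lambda>v. 1 / (l - h x)^2 * h' v)) (at x)"
        by (rule has_derivative_transform_within_open[OF _ oU x]) (simp add: k_def restr_def)
      moreover have "complex_linear (\<lambda>v. 1 / (l - h x)^2 * h' v)"
        using h'(2) unfolding complex_linear_def by (simp add: scaleC_complex_def add_divide_distrib)
      ultimately show "\<exists>f'. (k has_derivative f') (at x) \<and> complex_linear f'" by blast
    qed
    have "cmod (k x) \<le> 1 / (cmod l - M)" if "x \<in> U" for x
    proof -
      have "cmod (k x) = 1 / cmod (l - h x)" using that by (simp add: k_def restr_def norm_divide)
      also have "\<dots> \<le> 1 / (cmod l - M)" using dist[OF that] lM by (intro divide_left_mono) (auto intro!: mult_pos_pos)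
      finally show ?thesis .
    qed
    then have "bounded (k ` U)" unfolding bounded_iff by blast
    then show ?thesis using hol unfolding Hinf_def by (auto simp: k_def restr_def)
  qed
  define pw where "pw = (\<lambda>m x. one_on U x * h x ^ m)"
  have pwA: "pw m \<in> A" for m
  proof (induction m)
    case 0
    then show ?case using cua_facts(2)[OF A] by (simp add: pw_def)
  next
    case (Suc m)
    have "pw (Suc m) = (\<lambda>x. pw m x * h x)" by (simp add: pw_def fun_eq_iff algebra_simps)
    then show ?case using cua_facts(4)[OF A Suc h] by simp
  qed
  define P where "P = (\<lambda>N x. \<Sum>m<N. (1 / l^(Suc m)) * pw m x)"
  have PA: "P N \<in> A" for N
  proof (induction N)
    case 0
    have "(\<lambda>x. 0 * one_on U x) \<in> A" using cua_facts(5)[OF A cua_facts(2)[OF A]] .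
    then show ?case by (simp add: P_def)
  next
    case (Suc N)
    have eq: "P (Suc N) = (\<lambda>x. P N x + (\<lambda>x. (1 / l^(Suc N)) * pw N x) x)" by (simp add: P_def fun_eq_iff)
    show ?case unfolding eq by (rule cua_facts(3)[OF A Suc cua_facts(5)[OF A pwA]])
  qed
  have Pdiff: "cmod (P N x - k x) \<le> (M / cmod l)^N / (cmod l - M)" if x: "x \<in> U" for N x
  proof -
    have "P N x = (\<Sum>m<N. h x^m / l^(Suc m))" using x by (simp add: P_def pw_def one_on_def)
    then have eq: "(l - h x) * P N x = 1 - (h x / l)^N" using geom_id[OF l0] by simp
    have "P N x = ((l - h x) * P N x) / (l - h x)" using ne[OF x] by simp
    also have "\<dots> = (1 - (h x / l)^N) / (l - h x)" using eq by simp
    finally have "P N x - k x = (1 - (h x / l)^N) / (l - h x) - 1 / (l - h x)"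
      using x by (simp add: k_def restr_def)
    also have "\<dots> = - ((h x / l)^N / (l - h x))" by (simp add: diff_divide_distrib[symmetric])
    finally have "P N x - k x = - ((h x / l)^N / (l - h x))" .
    then have "cmod (P N x - k x) = (cmod (h x) / cmod l)^N / cmod (l - h x)"
      by (simp add: norm_divide norm_power)
    also have "\<dots> \<le> (M / cmod l)^N / (cmod l - M)"
      using hb[OF x] dist[OF x] lM M
      by (intro frac_le power_mono divide_right_mono) auto
    finally show ?thesis .
  qed
  have kA: "k \<in> A"
  proof (rule cua_facts(6)[OF A PA kH])
    fix e :: real assume e: "e > 0"
    have lpos: "0 < cmod l" using lM M by linarith
    have r: "M / cmod l < 1" "0 \<le> M / cmod l" using lM lpos M by (auto simp: divide_less_eq)
    obtain N0 where N0: "(M / cmod l)^N0 < e * (cmod l - M)"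
      using real_arch_pow_inv[of "e * (cmod l - M)" "M / cmod l"] r e lM by auto
    show "\<exists>N. \<forall>n\<ge>N. \<forall>x\<in>U. cmod (P n x - k x) < e"
    proof (intro exI allI impI ballI)
      fix n x assume n: "n \<ge> N0" and x: "x \<in> U"
      have "(M / cmod l)^n \<le> (M / cmod l)^N0" using r n by (intro power_decreasing) auto
      then have q: "(M / cmod l)^n < e * (cmod l - M)" using N0 by linarith
      have pos: "0 < cmod l - M" using lM by simp
      have "(M / cmod l)^n / (cmod l - M) < e" by (subst pos_divide_less_eq[OF pos]) (rule q)
      then show "cmod (P n x - k x) < e" using Pdiff[OF x, of n] by simp
    qed
  qed
  define E where "E = (\<lambda>x. (\<lambda>x. l * one_on U x) x + (\<lambda>x. (-1) * h x) x)"
  have EA: "E \<in> A" unfolding E_def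
    by (rule cua_facts(3)[OF A cua_facts(5)[OF A cua_facts(2)[OF A]] cua_facts(5)[OF A h]])
  have "\<tau> E = \<tau> (\<lambda>x. l * one_on U x) + \<tau> (\<lambda>x. (-1) * h x)" unfolding E_def
    by (rule spec_facts(1)[OF t cua_facts(5)[OF A cua_facts(2)[OF A]] cua_facts(5)[OF A h]])
  also have "\<dots> = l * \<tau> (one_on U) + (-1) * \<tau> h"
    by (simp only: spec_facts(2)[OF t cua_facts(2)[OF A]] spec_facts(2)[OF t h])
  finally have tE: "\<tau> E = 0" using tau_one[OF A t] l_def by simp
  have kE: "(\<lambda>x. k x * E x) = one_on U"
  proof (rule ext)
    fix x show "k x * E x = one_on U x"
    proof (cases "x \<in> U")
      case True
      have "k x * E x = (l - h x) / (l - h x)" using True by (simp add: k_def restr_def E_def one_on_def)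
      also have "\<dots> = 1" using ne[OF True] by simp
      finally show ?thesis using True by (simp add: one_on_def)
    next
      case False then show ?thesis by (simp add: k_def restr_def one_on_def)
    qed
  qed
  have "\<tau> (\<lambda>x. k x * E x) = \<tau> k * \<tau> E" by (rule spec_facts(3)[OF t kA EA])
  then have "\<tau> (one_on U) = \<tau> k * \<tau> E" by (simp only: kE)
  then have "\<tau> (one_on U) = 0" by (simp only: tE mult_zero_right)
  then show False using tau_one[OF A t] by simp
qed



lemma uab_facts:
  assumes "uniform_algebra_between U H"
  shows "closed_unital_subalgebra U H" "Au U \<subseteq> H"
  using assms unfolding uniform_algebra_between_def by auto

lemma restr_in_H:
  assumes "uniform_algebra_between U H" "open U" "bounded U" "L \<in> dual_space"
  shows "restr U L \<in> H"
  using restr_dual_Au[OF assms(2-4)] uab_facts(2)[OF assms(1)] by blast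

lemma A_sub_H:
  assumes "uniform_algebra_between U H" "open U" "bounded U"
  shows "A_alg U \<subseteq> H"
  unfolding A_alg_def using uab_facts(1)[OF assms(1)] restr_in_H[OF assms] by blast

lemma Aalg_lim:
  fixes U :: "'a::complex_banach set"
  assumes UH: "uniform_algebra_between U H" and oU: "open U" and bU: "bounded U" and ne: "U \<noteq> {}"
    and t: "\<tau> \<in> fiber U H \<phi>" and g: "g \<in> A_alg U"
  shows "\<And>F. F \<noteq> bot \<Longrightarrow> eventually (\<lambda>x. x \<in> U) F \<Longrightarrow> (\<forall>L\<in>dual_space. ((\<lambda>x. L x) \<longlongrightarrow> \<phi> L) F)
     \<Longrightarrow> (g \<longlongrightarrow> \<tau> g) F"
proof -
  have H: "closed_unital_subalgebra U H" using uab_facts(1)[OF UH] .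
  have ts: "\<tau> \<in> spectrum_alg H" and tL: "\<And>L. L \<in> dual_space \<Longrightarrow> \<tau> (restr U L) = \<phi> L"
    using t unfolding fiber_def by auto
  define S where "S = {g \<in> H. \<forall>F. F \<noteq> bot \<and> eventually (\<lambda>x. x \<in> U) F \<and> (\<forall>L\<in>dual_space. ((\<lambda>x. L x) \<longlongrightarrow> \<phi> L) F)
     \<longrightarrow> (g \<longlongrightarrow> \<tau> g) F}"
  have SH: "S \<subseteq> H" by (auto simp: S_def)
  have cS: "closed_unital_subalgebra U S"
    unfolding closed_unital_subalgebra_def
  proof (intro conjI ballI allI impI)
    show "S \<subseteq> Hinf U" using SH cua_facts(1)[OF H] by blast
  next
    show "one_on U \<in> S"
      unfolding S_def
    proof (intro CollectI conjI allI impI cua_facts(2)[OF H])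
      fix F :: "'a filter" assume F: "F \<noteq> bot \<and> eventually (\<lambda>x. x \<in> U) F \<and> (\<forall>L\<in>dual_space. ((\<lambda>x. L x) \<longlongrightarrow> \<phi> L) F)"
      have "eventually (\<lambda>x. one_on U x = 1) F" using conjunct1[OF conjunct2[OF F]] by (rule eventually_mono) (simp add: one_on_def)
      then have "(one_on U \<longlongrightarrow> 1) F" by (rule tendsto_eventually)
      then show "(one_on U \<longlongrightarrow> \<tau> (one_on U)) F" using tau_one[OF H ts] by simp
    qed
  next
    fix f g assume f: "f \<in> S" and g: "g \<in> S"
    then have fH: "f \<in> H" and gH: "g \<in> H" using SH by auto
    show "(\<lambda>x. f x + g x) \<in> S" unfolding S_def
      using f g cua_facts(3)[OF H fH gH] spec_facts(1)[OF ts fH gH]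
      by (auto simp: S_def intro!: tendsto_add)
  next
    fix f g assume f: "f \<in> S" and g: "g \<in> S"
    then have fH: "f \<in> H" and gH: "g \<in> H" using SH by auto
    show "(\<lambda>x. f x * g x) \<in> S" unfolding S_def
      using f g cua_facts(4)[OF H fH gH] spec_facts(3)[OF ts fH gH]
      by (auto simp: S_def intro!: tendsto_mult)
  next
    fix c f assume f: "f \<in> S"
    then have fH: "f \<in> H" using SH by auto
    show "(\<lambda>x. c * f x) \<in> S" unfolding S_def
      using f cua_facts(5)[OF H fH] spec_facts(2)[OF ts fH]
      by (auto simp: S_def intro!: tendsto_mult)
  next
    fix Fs :: "nat \<Rightarrow> 'a \<Rightarrow> complex" and g
    assume a: "(\<forall>n. Fs n \<in> S) \<and> g \<in> Hinf U \<and> (\<forall>\<epsilon>>0. \<exists>N. \<forall>n\<ge>N. \<forall>x\<in>U. cmod (Fs n x - g x) < \<epsilon>)"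
    then have FsH: "\<And>n. Fs n \<in> H" using SH by auto
    have gH: "g \<in> H"
    proof (rule cua_facts(6)[OF H])
      show "\<And>n. Fs n \<in> H" by (rule FsH)
      show "g \<in> Hinf U" using a by blast
      show "\<And>\<epsilon>. \<epsilon>>0 \<Longrightarrow> \<exists>N. \<forall>n\<ge>N. \<forall>x\<in>U. cmod (Fs n x - g x) < \<epsilon>" using a by blast
    qed
    show "g \<in> S" unfolding S_def
    proof (intro CollectI conjI gH allI impI)
      fix F :: "'a filter" assume F: "F \<noteq> bot \<and> eventually (\<lambda>x. x \<in> U) F \<and> (\<forall>L\<in>dual_space. ((\<lambda>x. L x) \<longlongrightarrow> \<phi> L) F)"
      show "(g \<longlongrightarrow> \<tau> g) F"
      proof (rule tendstoI)
        fix e :: real assume e: "e > 0"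
        obtain N where N: "\<forall>n\<ge>N. \<forall>x\<in>U. cmod (Fs n x - g x) < e/3" using a e
          by (meson divide_pos_pos zero_less_numeral)
        have dA: "(\<lambda>x. Fs N x + (-1) * g x) \<in> H" using cua_facts(3)[OF H FsH cua_facts(5)[OF H gH]] .
        have hb: "cmod (Fs N x + (-1) * g x) \<le> e/3" if "x \<in> U" for x
        proof -
          have "cmod (Fs N x - g x) < e/3" using N that by blast
          then show ?thesis by simp
        qed
        have "cmod (\<tau> (\<lambda>x. Fs N x + (-1) * g x)) \<le> e/3"
          by (rule tau_bound[OF H oU ts dA _ hb]) (use e in simp)
        moreover have "\<tau> (\<lambda>x. Fs N x + (-1) * g x) = \<tau> (Fs N) + (-1) * \<tau> g"
          by (simp only: spec_facts(1)[OF ts FsH cua_facts(5)[OF H gH]] spec_facts(2)[OF ts gH])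
        ultimately have t1: "cmod (\<tau> (Fs N) - \<tau> g) \<le> e/3" by (simp only:) simp
        have "(Fs N \<longlongrightarrow> \<tau> (Fs N)) F" using a F unfolding S_def by blast
        then have dev: "eventually (\<lambda>x. dist (Fs N x) (\<tau> (Fs N)) < e/3) F" by (rule tendstoD) (use e in simp)
        have evU: "eventually (\<lambda>x. x \<in> U) F" using F by blast
        show "eventually (\<lambda>x. dist (g x) (\<tau> g) < e) F"
        proof (rule eventually_elim2[OF evU dev])
          fix x assume x: "x \<in> U" and d: "dist (Fs N x) (\<tau> (Fs N)) < e/3"
          have "g x - \<tau> g = (g x - Fs N x) + ((Fs N x - \<tau> (Fs N)) + (\<tau> (Fs N) - \<tau> g))" by simp
          then have "cmod (g x - \<tau> g) \<le> cmod (g x - Fs N x) + cmod ((Fs N x - \<tau> (Fs N)) + (\<tau> (Fs N) - \<tau> g))"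
            by (metis norm_triangle_ineq)
          also have "\<dots> \<le> cmod (g x - Fs N x) + (cmod (Fs N x - \<tau> (Fs N)) + cmod (\<tau> (Fs N) - \<tau> g))"
            by (intro add_left_mono norm_triangle_ineq)
          finally have tri: "cmod (g x - \<tau> g) \<le> cmod (g x - Fs N x) + (cmod (Fs N x - \<tau> (Fs N)) + cmod (\<tau> (Fs N) - \<tau> g))" .
          have "cmod (g x - Fs N x) < e/3" using N x by (simp add: norm_minus_commute)
          moreover have "cmod (Fs N x - \<tau> (Fs N)) < e/3" using d by (simp add: dist_norm)
          ultimately show "dist (g x) (\<tau> g) < e" using tri t1 by (simp add: dist_norm)
        qed
      qed
    qed
  qed
  have "restr U L \<in> S" if L: "L \<in> dual_space" for L
    unfolding S_def
  proof (intro CollectI conjI restr_in_H[OF UH oU bU L] allI impI)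
    fix F :: "'a filter" assume F: "F \<noteq> bot \<and> eventually (\<lambda>x. x \<in> U) F \<and> (\<forall>L\<in>dual_space. ((\<lambda>x. L x) \<longlongrightarrow> \<phi> L) F)"
    have tl: "((\<lambda>x. L x) \<longlongrightarrow> \<phi> L) F" using F L by blast
    have ev: "eventually (\<lambda>x. L x = restr U L x) F" using conjunct1[OF conjunct2[OF F]] by (rule eventually_mono) (simp add: restr_def)
    have "(restr U L \<longlongrightarrow> \<phi> L) F" using tl by (rule iffD1[OF tendsto_cong[OF ev]])
    then show "(restr U L \<longlongrightarrow> \<tau> (restr U L)) F" using tL[OF L] by simp
  qed
  then have "A_alg U \<subseteq> S" unfolding A_alg_def using cS by blast
  then show "\<And>F. F \<noteq> bot \<Longrightarrow> eventually (\<lambda>x. x \<in> U) F \<Longrightarrow> (\<forall>L\<in>dual_space. ((\<lambda>x. L x) \<longlongrightarrow> \<phi> L) F)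
     \<Longrightarrow> (g \<longlongrightarrow> \<tau> g) F" using g unfolding S_def by blast
qed



lemma cluster_closed:
  fixes p :: "'b::topological_space"
  assumes "inf (nhds p) G \<noteq> bot" "closed C" "eventually (\<lambda>q. q \<in> C) G"
  shows "p \<in> C"
proof (rule ccontr)
  assume "p \<notin> C"
  then have "eventually (\<lambda>q. q \<in> - C) (nhds p)" using assms(2)
    by (intro eventually_nhds_in_open) auto
  then have "eventually (\<lambda>q. False) (inf (nhds p) G)"
    using assms(3) unfolding eventually_inf by blast
  then show False using assms(1) by (simp add: eventually_False)
qed

lemma cont_coord: "continuous_on UNIV (\<lambda>q::'i \<Rightarrow> 'b::topological_space. q i)"
  by simp

lemma cluster_lim:
  fixes p :: "'i \<Rightarrow> complex"
  assumes "inf (nhds p) G \<noteq> bot" "\<And>e. e > 0 \<Longrightarrow> eventually (\<lambda>q. cmod (q i - d) \<le> e) G"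
  shows "p i = d"
proof -
  have le: "cmod (p i - d) \<le> e" if e: "e > 0" for e
  proof -
    have "closed {q::'i \<Rightarrow> complex. cmod (q i - d) \<le> e}"
      by (rule closed_Collect_le[OF continuous_on_norm[OF continuous_on_diff[OF cont_coord continuous_on_const]] continuous_on_const])
    then have "p \<in> {q::'i \<Rightarrow> complex. cmod (q i - d) \<le> e}"
      by (rule cluster_closed[OF assms(1)]) (simp add: assms(2)[OF e])
    then show ?thesis by simp
  qed
  show ?thesis
  proof (rule ccontr)
    assume ne: "p i \<noteq> d"
    then have pos: "cmod (p i - d) > 0" by simp
    have "cmod (p i - d) \<le> cmod (p i - d) / 2" by (rule le) (use pos in simp)
    then show False using pos by simp
  qed
qed

lemma closed_eq_coord:
  fixes A B :: "('i \<Rightarrow> complex) \<Rightarrow> complex"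
  assumes "continuous_on UNIV A" "continuous_on UNIV B"
  shows "closed {q. A q = B q}"
  using closed_Collect_eq[OF assms] .

lemma cluster_sub_image:
  fixes U :: "'a::complex_banach set"
  assumes UH: "uniform_algebra_between U H" and oU: "open U" and bU: "bounded U"
    and f: "f \<in> H" and c: "c \<in> cluster_set U f \<phi>"
  shows "c \<in> gelfand f ` fiber U H \<phi>"
proof -
  have H: "closed_unital_subalgebra U H" using uab_facts(1)[OF UH] .
  obtain F :: "'a filter" where F: "F \<noteq> bot" "eventually (\<lambda>x. x \<in> U) F"
    "\<forall>L\<in>dual_space. ((\<lambda>x. L x) \<longlongrightarrow> \<phi> L) F" "(f \<longlongrightarrow> c) F"
    using c unfolding cluster_set_def by blast
  define bnd where "bnd g = (SOME b. \<forall>x\<in>U. cmod (g x) \<le> b)" for g :: "'a \<Rightarrow> complex"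
  have bnd: "\<forall>x\<in>U. cmod (g x) \<le> bnd g" if "g \<in> H" for g
  proof -
    have "bounded (g ` U)" using that cua_facts(1)[OF H] unfolding Hinf_def by blast
    then have "\<exists>b. \<forall>x\<in>U. cmod (g x) \<le> b" unfolding bounded_iff by blast
    then show ?thesis unfolding bnd_def by (rule someI_ex)
  qed
  define \<iota> where "\<iota> x = (\<lambda>g. if g \<in> H then g x else 0)" for x
  define K where "K = PiE UNIV (\<lambda>g. if g \<in> H then cball (0::complex) (bnd g) else {0})"
  have "compactin (product_topology (\<lambda>_. euclidean) UNIV) K"
    unfolding K_def compactin_PiE by (auto simp: compact_cball)
  then have cK: "compact K" by (simp add: euclidean_product_topology)
  define G where "G = filtermap \<iota> F"
  have Gb: "G \<noteq> bot" using F(1) by (simp add: G_def filtermap_bot_iff)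
  have GK: "eventually (\<lambda>q. q \<in> K) G"
    unfolding G_def eventually_filtermap using F(2)
    by (rule eventually_mono) (auto simp: K_def \<iota>_def PiE_iff bnd)
  obtain p where p: "p \<in> K" "inf (nhds p) G \<noteq> bot"
    using cK Gb GK unfolding compact_filter by blast
  have lim: "p g = d" if g: "g \<in> H" and gl: "(g \<longlongrightarrow> d) F" for g d
  proof (rule cluster_lim[OF p(2)])
    fix e :: real assume e: "e > 0"
    have "eventually (\<lambda>x. dist (g x) d < e) F" using tendstoD[OF gl e] .
    then show "eventually (\<lambda>q. cmod (q g - d) \<le> e) G"
      unfolding G_def eventually_filtermap
      by (rule eventually_mono) (simp add: \<iota>_def g dist_norm)
  qed
  have alw: "p \<in> {q. A q = B q}" if "continuous_on UNIV A" "continuous_on UNIV B"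
    "\<And>x. A (\<iota> x) = B (\<iota> x)" for A B :: "(('a \<Rightarrow> complex) \<Rightarrow> complex) \<Rightarrow> complex"
    using cluster_closed[OF p(2) closed_eq_coord[OF that(1,2)]] that(3)
    unfolding G_def eventually_filtermap by simp
  have cc: "continuous_on UNIV (\<lambda>q::('a \<Rightarrow> complex) \<Rightarrow> complex. q g)" for g by simp
  have sp: "p \<in> spectrum_alg H"
    unfolding spectrum_alg_def
  proof (intro CollectI conjI ballI allI)
    fix f g assume f: "f \<in> H" and g: "g \<in> H"
    have fg1: "(\<lambda>x. f x + g x) \<in> H" "(\<lambda>x. f x * g x) \<in> H" using cua_facts(3,4)[OF H f g] by auto
    have "p \<in> {q. q (\<lambda>x. f x + g x) = q f + q g}"
      by (rule alw[OF cc continuous_on_add[OF cc cc]]) (simp add: \<iota>_def f g fg1)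
    then show "p (\<lambda>x. f x + g x) = p f + p g" by simp
    have "p \<in> {q. q (\<lambda>x. f x * g x) = q f * q g}"
      by (rule alw[OF cc continuous_on_mult[OF cc cc]]) (simp add: \<iota>_def f g fg1)
    then show "p (\<lambda>x. f x * g x) = p f * p g" by simp
  next
    fix a f assume f: "f \<in> H"
    have fa: "(\<lambda>x. a * f x) \<in> H" using cua_facts(5)[OF H f] by auto
    have "p \<in> {q. q (\<lambda>x. a * f x) = a * q f}"
      by (rule alw[OF cc continuous_on_mult[OF continuous_on_const cc]]) (simp add: \<iota>_def f fa)
    then show "p (\<lambda>x. a * f x) = a * p f" by simp
  next
    have "eventually (\<lambda>x. one_on U x = 1) F" using F(2) by (rule eventually_mono) (simp add: one_on_def)
    then have "(one_on U \<longlongrightarrow> 1) F" by (rule tendsto_eventually)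
    then have "p (one_on U) = 1" using lim cua_facts(2)[OF H] by blast
    then show "\<exists>f\<in>H. p f \<noteq> 0" using cua_facts(2)[OF H] by force
  qed
  have fib: "p \<in> fiber U H \<phi>"
    unfolding fiber_def
  proof (intro CollectI conjI sp ballI)
    fix L :: "'a \<Rightarrow> complex" assume L: "L \<in> dual_space"
    have tl: "((\<lambda>x. L x) \<longlongrightarrow> \<phi> L) F" using F(3) L by blast
    have ev: "eventually (\<lambda>x. L x = restr U L x) F" using F(2) by (rule eventually_mono) (simp add: restr_def)
    have "(restr U L \<longlongrightarrow> \<phi> L) F" using tl by (rule iffD1[OF tendsto_cong[OF ev]])
    then show "p (restr U L) = \<phi> L" using lim restr_in_H[OF UH oU bU L] by blast
  qed
  have "gelfand f p = c" using lim[OF f F(4)] by (simp add: gelfand_def)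
  then show ?thesis using fib by force
qed



theorem mainTheorem4:
  fixes H :: "('a::complex_banach \<Rightarrow> complex) set"
    and \<phi> :: "('a \<Rightarrow> complex) \<Rightarrow> complex"
  assumes "uniform_algebra_between (ball 0 1) H"
    and "\<phi> \<in> bidual_ball"
  shows "(\<forall>f\<in>H. cluster_set (ball 0 1) f \<phi> = gelfand f ` fiber (ball 0 1) H \<phi>) \<longleftrightarrow>
    (\<forall>(n::nat) (fs :: nat \<Rightarrow> 'a \<Rightarrow> complex).
       n \<ge> 1 \<and> (\<forall>i\<in>{1..<n}. fs i \<in> A_alg (ball 0 1)) \<and> fs n \<in> H \<and>
       (\<exists>\<delta>>0. \<forall>x\<in>ball 0 1. (\<Sum>i=1..n. cmod (fs i x)) \<ge> \<delta>)
       \<longrightarrow> \<not> (\<exists>\<tau>\<in>fiber (ball 0 1) H \<phi>. \<forall>i\<in>{1..n}. gelfand (fs i) \<tau> = 0))"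
proof -
  define U :: "'a set" where "U = ball 0 1"
  have UH: "uniform_algebra_between U H" using assms(1) by (simp add: U_def)
  have oU: "open U" and bU: "bounded U" and neU: "U \<noteq> {}" by (auto simp: U_def)
  have H: "closed_unital_subalgebra U H" using uab_facts(1)[OF UH] .
  have oneH: "one_on U \<in> H" using cua_facts(2)[OF H] .
  show ?thesis unfolding U_def[symmetric]
  proof
    assume hyp: "\<forall>f\<in>H. cluster_set U f \<phi> = gelfand f ` fiber U H \<phi>"
    show "\<forall>(n::nat) (fs :: nat \<Rightarrow> 'a \<Rightarrow> complex).
       n \<ge> 1 \<and> (\<forall>i\<in>{1..<n}. fs i \<in> A_alg U) \<and> fs n \<in> H \<and>
       (\<exists>\<delta>>0. \<forall>x\<in>U. (\<Sum>i=1..n. cmod (fs i x)) \<ge> \<delta>)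
       \<longrightarrow> \<not> (\<exists>\<tau>\<in>fiber U H \<phi>. \<forall>i\<in>{1..n}. gelfand (fs i) \<tau> = 0)"
    proof (intro allI impI notI)
      fix n :: nat and fs :: "nat \<Rightarrow> 'a \<Rightarrow> complex"
      assume a: "n \<ge> 1 \<and> (\<forall>i\<in>{1..<n}. fs i \<in> A_alg U) \<and> fs n \<in> H \<and>
       (\<exists>\<delta>>0. \<forall>x\<in>U. (\<Sum>i=1..n. cmod (fs i x)) \<ge> \<delta>)"
        and "\<exists>\<tau>\<in>fiber U H \<phi>. \<forall>i\<in>{1..n}. gelfand (fs i) \<tau> = 0"
      then obtain \<tau> where t: "\<tau> \<in> fiber U H \<phi>" and z: "\<forall>i\<in>{1..n}. \<tau> (fs i) = 0"
        by (auto simp: gelfand_def)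
      have n1: "1 \<le> n" using a by simp
      have aA: "\<forall>i\<in>{1..<n}. fs i \<in> A_alg U" using a by simp
      have fnH: "fs n \<in> H" using a by simp
      have ad: "\<exists>\<delta>>0. \<forall>x\<in>U. (\<Sum>i=1..n. cmod (fs i x)) \<ge> \<delta>" using a by simp
      obtain \<delta> where d: "\<delta> > 0" "\<forall>x\<in>U. (\<Sum>i=1..n. cmod (fs i x)) \<ge> \<delta>" using ad by blast
      have fz: "\<tau> (fs n) = 0" using z n1 by simp
      have "0 \<in> gelfand (fs n) ` fiber U H \<phi>"
        by (rule image_eqI[of _ _ \<tau>]) (use fz t in \<open>simp_all add: gelfand_def\<close>)
      then have "0 \<in> cluster_set U (fs n) \<phi>" using hyp[rule_format, OF fnH] by simp
      then obtain F :: "'a filter" where F: "F \<noteq> bot" "eventually (\<lambda>x. x \<in> U) F"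
        "\<forall>L\<in>dual_space. ((\<lambda>x. L x) \<longlongrightarrow> \<phi> L) F" "(fs n \<longlongrightarrow> 0) F"
        unfolding cluster_set_def by blast
      have li: "(fs i \<longlongrightarrow> 0) F" if i: "i \<in> {1..n}" for i
      proof (cases "i = n")
        case True then show ?thesis using F(4) by simp
      next
        case False
        then have "fs i \<in> A_alg U" using aA i by auto
        then have "(fs i \<longlongrightarrow> \<tau> (fs i)) F" using Aalg_lim[OF UH oU bU neU t] F(1-3) by blast
        then show ?thesis using z i by simp
      qed
      have "((\<lambda>x. \<Sum>i=1..n. cmod (fs i x)) \<longlongrightarrow> (\<Sum>i=1..n. cmod (0::complex))) F"
        by (intro tendsto_sum tendsto_norm li)
      then have "((\<lambda>x. \<Sum>i=1..n. cmod (fs i x)) \<longlongrightarrow> 0) F" by simp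
      then have "eventually (\<lambda>x. dist (\<Sum>i=1..n. cmod (fs i x)) 0 < \<delta>) F" using d(1) by (rule tendstoD)
      then have "eventually (\<lambda>x. False) F" using F(2)
        by (rule eventually_elim2) (use d(2) in \<open>auto simp: dist_norm\<close>)
      then show False using F(1) by (simp add: eventually_False)
    qed
  next
    assume cond: "\<forall>(n::nat) (fs :: nat \<Rightarrow> 'a \<Rightarrow> complex).
       n \<ge> 1 \<and> (\<forall>i\<in>{1..<n}. fs i \<in> A_alg U) \<and> fs n \<in> H \<and>
       (\<exists>\<delta>>0. \<forall>x\<in>U. (\<Sum>i=1..n. cmod (fs i x)) \<ge> \<delta>)
       \<longrightarrow> \<not> (\<exists>\<tau>\<in>fiber U H \<phi>. \<forall>i\<in>{1..n}. gelfand (fs i) \<tau> = 0)"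
    show "\<forall>f\<in>H. cluster_set U f \<phi> = gelfand f ` fiber U H \<phi>"
    proof (intro ballI equalityI subsetI)
      fix f c assume f: "f \<in> H" and "c \<in> cluster_set U f \<phi>"
      then show "c \<in> gelfand f ` fiber U H \<phi>" using cluster_sub_image[OF UH oU bU] by blast
    next
      fix f c assume f: "f \<in> H" and "c \<in> gelfand f ` fiber U H \<phi>"
      then obtain \<tau> where t: "\<tau> \<in> fiber U H \<phi>" and c: "c = \<tau> f" by (auto simp: gelfand_def)
      have ts: "\<tau> \<in> spectrum_alg H" and tL: "\<And>L. L \<in> dual_space \<Longrightarrow> \<tau> (restr U L) = \<phi> L"
        using t unfolding fiber_def by auto
      have t1: "\<tau> (one_on U) = 1" using tau_one[OF H ts] .
      define B :: "(('a \<Rightarrow> complex) set \<times> real) set" where "B = {(Ls, e). finite Ls \<and> Ls \<subseteq> dual_space \<and> (e::real) > 0}"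
      define W where "W = (\<lambda>(Ls, e). {x\<in>U. (\<forall>L\<in>Ls. cmod (L x - \<phi> L) < e) \<and> cmod (f x - c) < e})"
      show "c \<in> cluster_set U f \<phi>"
      proof (cases "\<forall>b\<in>B. W b \<noteq> {}")
        case True
        define F where "F = (INF b\<in>B. principal (W b))"
        have ev: "eventually P F \<longleftrightarrow> (\<exists>b\<in>B. eventually P (principal (W b)))" for P
          unfolding F_def
        proof (rule eventually_INF_base)
          have "({}, 1) \<in> B" by (simp add: B_def)
          then show "B \<noteq> {}" by blast
        next
          fix a b assume ab: "a \<in> B" "b \<in> B"
          obtain L1 e1 where a: "a = (L1, e1)" by (cases a)
          obtain L2 e2 where b: "b = (L2, e2)" by (cases b)
          have "(L1 \<union> L2, min e1 e2) \<in> B" using ab a b by (auto simp: B_def)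
          moreover have "principal (W (L1 \<union> L2, min e1 e2)) \<le> inf (principal (W a)) (principal (W b))"
            by (auto simp: a b W_def)
          ultimately show "\<exists>x\<in>B. principal (W x) \<le> inf (principal (W a)) (principal (W b))" by blast
        qed
        have Fb: "F \<noteq> bot"
          using True by (auto simp: ev eventually_False[symmetric] eventually_principal)
        have FU: "eventually (\<lambda>x. x \<in> U) F"
          unfolding ev by (rule bexI[of _ "({}, 1)"]) (auto simp: B_def W_def eventually_principal)
        have FL: "((\<lambda>x. L x) \<longlongrightarrow> \<phi> L) F" if L: "L \<in> dual_space" for L
        proof (rule tendstoI)
          fix e :: real assume e: "e > 0"
          show "eventually (\<lambda>x. dist (L x) (\<phi> L) < e) F"
            unfolding ev by (rule bexI[of _ "({L}, e)"]) (use e L in \<open>auto simp: B_def W_def eventually_principal dist_norm\<close>)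
        qed
        have Ff: "(f \<longlongrightarrow> c) F"
        proof (rule tendstoI)
          fix e :: real assume e: "e > 0"
          show "eventually (\<lambda>x. dist (f x) c < e) F"
            unfolding ev by (rule bexI[of _ "({}, e)"]) (use e in \<open>auto simp: B_def W_def eventually_principal dist_norm\<close>)
        qed
        show ?thesis unfolding cluster_set_def using Fb FU FL Ff by blast
      next
        case False
        then obtain Ls e where b: "finite Ls" "Ls \<subseteq> dual_space" "e > 0" and W: "W (Ls, e) = {}"
          by (auto simp: B_def)
        obtain xs where xs: "set xs = Ls" using finite_list[OF b(1)] by blast
        define k where "k = length xs"
        define fs where "fs = (\<lambda>i. if i \<le> k then (\<lambda>x. restr U (xs!(i-1)) x + (\<lambda>x. (- \<phi> (xs!(i-1))) * one_on U x) x)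
                                else (\<lambda>x. f x + (\<lambda>x. (- c) * one_on U x) x))"
        have xsd: "xs!(i-1) \<in> dual_space" if "1 \<le> i" "i \<le> k" for i
          using that xs b(2) k_def by auto
        have fsA: "fs i \<in> A_alg U" if "1 \<le> i" "i \<le> k" for i
          unfolding A_alg_def
        proof (rule InterI)
          fix A assume "A \<in> {A. closed_unital_subalgebra U A \<and> (\<forall>L\<in>dual_space. restr U L \<in> A)}"
          then have A: "closed_unital_subalgebra U A" and rA: "\<forall>L\<in>dual_space. restr U L \<in> A" by auto
          have r: "restr U (xs!(i-1)) \<in> A" using rA xsd[OF that] by blast
          have eq: "fs i = (\<lambda>x. restr U (xs!(i-1)) x + (\<lambda>x. (- \<phi> (xs!(i-1))) * one_on U x) x)"
            using that by (simp add: fs_def)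
          show "fs i \<in> A" unfolding eq
            by (rule cua_facts(3)[OF A r cua_facts(5)[OF A cua_facts(2)[OF A]]])
        qed
        have eqn: "fs (k+1) = (\<lambda>x. f x + (\<lambda>x. (- c) * one_on U x) x)" by (simp add: fs_def)
        have fsn: "fs (k+1) \<in> H" unfolding eqn
          by (rule cua_facts(3)[OF H f cua_facts(5)[OF H oneH]])
        have bound: "(\<Sum>i=1..k+1. cmod (fs i x)) \<ge> e" if x: "x \<in> U" for x
        proof -
          have x1: "one_on U x = 1" "\<And>g. restr U g x = g x" using x by (auto simp: one_on_def restr_def)
          have le: "cmod (fs j x) \<le> (\<Sum>i=1..k+1. cmod (fs i x))" if "j \<in> {1..k+1}" for j
            by (rule member_le_sum) (use that in auto)
          from W x have "(\<exists>L\<in>Ls. cmod (L x - \<phi> L) \<ge> e) \<or> cmod (f x - c) \<ge> e"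
            by (force simp: W_def)
          then show ?thesis
          proof
            assume "\<exists>L\<in>Ls. cmod (L x - \<phi> L) \<ge> e"
            then obtain j where j: "j < k" "e \<le> cmod ((xs!j) x - \<phi> (xs!j))"
              using xs by (auto simp: k_def in_set_conv_nth)
            have "fs (Suc j) x = (xs!j) x - \<phi> (xs!j)" using j x1 by (simp add: fs_def)
            then show ?thesis using le[of "Suc j"] j by auto
          next
            assume "cmod (f x - c) \<ge> e"
            moreover have "fs (k+1) x = f x - c" using x1 by (simp add: fs_def)
            ultimately show ?thesis using le[of "k+1"] by auto
          qed
        qed
        have zero: "\<forall>i\<in>{1..k+1}. gelfand (fs i) \<tau> = 0"
        proof
          fix i assume i: "i \<in> {1..k+1}"
          show "gelfand (fs i) \<tau> = 0"
          proof (cases "i \<le> k")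
            case True
            have r: "restr U (xs!(i-1)) \<in> H" using restr_in_H[OF UH oU bU xsd] i True by auto
            have eq: "fs i = (\<lambda>x. restr U (xs!(i-1)) x + (\<lambda>x. (- \<phi> (xs!(i-1))) * one_on U x) x)"
              using True by (simp add: fs_def)
            have "\<tau> (fs i) = \<tau> (restr U (xs!(i-1))) + (- \<phi> (xs!(i-1))) * \<tau> (one_on U)"
              unfolding eq
              by (simp only: spec_facts(1)[OF ts r cua_facts(5)[OF H oneH]] spec_facts(2)[OF ts oneH])
            then show ?thesis using tL xsd i True t1 by (simp add: gelfand_def)
          next
            case False
            then have ik: "i = k+1" using i by auto
            have "\<tau> (fs (k+1)) = \<tau> f + (- c) * \<tau> (one_on U)"
              unfolding eqn
              by (simp only: spec_facts(1)[OF ts f cua_facts(5)[OF H oneH]] spec_facts(2)[OF ts oneH])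
            then show ?thesis using c t1 ik by (simp add: gelfand_def)
          qed
        qed
        have "(k+1::nat) \<ge> 1 \<and> (\<forall>i\<in>{1..<k+1}. fs i \<in> A_alg U) \<and> fs (k+1) \<in> H \<and>
          (\<exists>\<delta>>0. \<forall>x\<in>U. (\<Sum>i=1..k+1. cmod (fs i x)) \<ge> \<delta>)"
          using fsA fsn bound b(3) by auto
        then have "\<not> (\<exists>\<tau>\<in>fiber U H \<phi>. \<forall>i\<in>{1..k+1}. gelfand (fs i) \<tau> = 0)" using cond by blast
        then show ?thesis using zero t by blast
      qed
    qed
  qed
qed

end
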